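(* Let $m\ge 1$, $n=2m$, and let $g(x_0,\ldots,x_{n-1})$ be a reduced polynomial in $\mathbb{F}_2[x_0,\ldots,x_{n-1}]$ (equivalently a Boolean function on $\mathbb{F}_2^n$) such that: (1) for every $0\le i\le m-1$, $g$ is unchanged when the variables $x_i$ and $x_{i+m}$ are interchanged; (2) for every $0\le i\le m-1$, no monomial of $g$ (with nonzero coefficient) contains both $x_i$ and $x_{i+m}$; (3) $g$ is rotation symmetric, i.e. $g(x_1,\ldots,x_{n-1},x_0)=g(x_0,\ldots,x_{n-1})$. Then there exists a rotation symmetric polynomial $\gamma(X_0,\ldots,X_{m-1})\in\mathbb{F}_2[X_0,\ldots,X_{m-1}]$ (i.e. $\gamma(X_0,X_1,\ldots,X_{m-1})=\gamma(X_1,\ldots,X_{m-1},X_0)$) such that $$g(x_0,\ldots,x_{n-1})=\gamma(x_0+x_m,\,x_1+x_{m+1},\,\ldots,\,x_{m-1}+x_{2m-1}).$$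
   Context: A reduced polynomial in $\mathbb{F}_2[x_0,\ldots,x_{n-1}]$ is one of the form $\sum_{u\in\mathbb{F}_2^n}c_u\prod_{i}x_i^{u_i}$ (each variable with exponent at most 1); Boolean functions on $\mathbb{F}_2^n$ are identified with such polynomials (their algebraic normal form). *)

theory Defs
  imports Main "HOL-Combinatorics.Transposition"
begin

text \<open>A reduced polynomial over F_2 is represented by its algebraic normal form:
  the set of monomials with coefficient 1, each monomial being the set of indices
  of the variables occurring in it.\<close>

type_synonym rpoly = "nat set set"

definition is_rpoly :: "nat \<Rightarrow> rpoly \<Rightarrow> bool" where
  "is_rpoly n P \<longleftrightarrow> (\<forall>S\<in>P. S \<subseteq> {0..<n})"

definition rename_vars :: "(nat \<Rightarrow> nat) \<Rightarrow> rpoly \<Rightarrow> rpoly" where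
  "rename_vars f P = (\<lambda>S. f ` S) ` P"

definition rotation_symmetric :: "nat \<Rightarrow> rpoly \<Rightarrow> bool" where
  "rotation_symmetric n P \<longleftrightarrow> rename_vars (\<lambda>j. (j + 1) mod n) P = P"

text \<open>Evaluation over F_2 (True = 1, addition = xor): the value is the parity of the
  number of monomials all of whose variables are 1.\<close>
definition anf_eval :: "rpoly \<Rightarrow> (nat \<Rightarrow> bool) \<Rightarrow> bool" where
  "anf_eval P x \<longleftrightarrow> odd (card {S \<in> P. \<forall>i\<in>S. x i})"

end

theory Submission imports Defs begin

lemma parity_sum:
  fixes f :: "'a \<Rightarrow> nat"
  assumes "finite A"
  shows "odd (sum f A) \<longleftrightarrow> odd (card {a\<in>A. odd (f a)})"
  using assms
proof (induction A rule: finite_induct)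
  case empty then show ?case by simp
next
  case (insert a A)
  have fin: "finite {b\<in>A. odd (f b)}" using insert by simp
  show ?case
  proof (cases "odd (f a)")
    case True
    then have "{b\<in>insert a A. odd (f b)} = insert a {b\<in>A. odd (f b)}" by auto
    then show ?thesis using insert fin True by simp
  next
    case False
    then have "{b\<in>insert a A. odd (f b)} = {b\<in>A. odd (f b)}" by auto
    then show ?thesis using insert False by simp
  qed
qed

lemma even_invol:
  assumes "finite A" "\<forall>a\<in>A. f a \<in> A \<and> f a \<noteq> a \<and> f (f a) = a"
  shows "even (card A)"
  using assms
proof (induction "card A" arbitrary: A rule: less_induct)
  case less
  show ?case
  proof (cases "A = {}")
    case True then show ?thesis by simp
  next
    case False
    then obtain a where a: "a \<in> A" by auto
    let ?B = "A - {a, f a}"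
    have fa: "f a \<in> A" "f a \<noteq> a" using less.prems a by auto
    have sub: "{a, f a} \<subseteq> A" using fa a by auto
    have c2: "card {a, f a} = 2" using fa by simp
    have "card {a, f a} \<le> card A" using sub less.prems(1) card_mono by blast
    then have cB: "card A = card ?B + 2"
      using sub c2 less.prems(1) card_Diff_subset[of "{a, f a}" A] by (simp del: card.insert_remove)
    have "\<forall>b\<in>?B. f b \<in> ?B \<and> f b \<noteq> b \<and> f (f b) = b"
    proof
      fix b assume b: "b \<in> ?B"
      then have b1: "b \<in> A" "b \<noteq> a" "b \<noteq> f a" by auto
      have h: "f b \<in> A" "f b \<noteq> b" "f (f b) = b" using less.prems(2) b1(1) by auto
      have haa: "f (f a) = a" using less.prems(2) a by auto
      have "f b \<noteq> a" using h haa b1 by metis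
      moreover have "f b \<noteq> f a" using h haa b1 by metis
      ultimately show "f b \<in> ?B \<and> f b \<noteq> b \<and> f (f b) = b" using h by auto
    qed
    then have "even (card ?B)" using less cB by simp
    then show ?thesis using cB by simp
  qed
qed

lemma mod_cases2:
  fixes s j m :: nat
  assumes "s < 2*m" "s mod m = j"
  shows "s = j \<or> s = j + m"
proof (cases "s < m")
  case True then show ?thesis using assms by simp
next
  case False
  then have "s mod m = s - m" using assms by (simp add: le_mod_geq)
  then show ?thesis using assms False by simp
qed

lemma transpose_mod: "transpose j (j + m) k mod m = k mod m"
  for j m k :: nat
  by (simp add: transpose_def)

lemma fiber:
  fixes m :: nat and g :: "nat set set" and x :: "nat \<Rightarrow> bool"
  assumes m: "m > 0" and rng: "\<forall>S\<in>g. S \<subseteq> {0..<2*m}" and fin: "finite g"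
    and sw: "\<forall>j<m. \<forall>S\<in>g. transpose j (j+m) ` S \<in> g"
    and pf: "\<forall>j<m. \<forall>S\<in>g. \<not>(j\<in>S \<and> j+m\<in>S)"
    and T: "T \<in> (\<lambda>S. (\<lambda>k. k mod m) ` S) ` g"
  shows "odd (card {S\<in>g. (\<forall>i\<in>S. x i) \<and> (\<lambda>k. k mod m) ` S = T}) \<longleftrightarrow> (\<forall>j\<in>T. x j \<noteq> x (j+m))"
proof -
  define F where "F = {S\<in>g. (\<forall>i\<in>S. x i) \<and> (\<lambda>k. k mod m) ` S = T}"
  have finF: "finite F" using fin F_def by simp
  obtain S1 where S1: "S1 \<in> g" "(\<lambda>k. k mod m) ` S1 = T" using T by auto
  have Tm: "T \<subseteq> {0..<m}" using S1 m by auto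
  have pmt: "(\<lambda>k. k mod m) ` (transpose j (j+m) ` S) = (\<lambda>k. k mod m) ` S" for j S
    by (simp add: image_image transpose_mod)
  have inpair: "\<exists>s\<in>S. s = j \<or> s = j + m" if "S \<in> g" "(\<lambda>k. k mod m) ` S = T" "j \<in> T" for S j
  proof -
    have "j \<in> (\<lambda>k. k mod m) ` S" using that by simp
    then obtain s where "s \<in> S" "s mod m = j" by blast
    moreover have "s < 2*m" using rng that(1) \<open>s \<in> S\<close> by fastforce
    ultimately show ?thesis using mod_cases2 by blast
  qed
  show ?thesis
  proof (cases "\<forall>j\<in>T. x j \<noteq> x (j+m)")
    case False
    then obtain j where j: "j \<in> T" "x j = x (j+m)" by auto
    have jm: "j < m" using j Tm by auto
    show ?thesis
    proof (cases "x j")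
      case False
      have "F = {}"
      proof (rule ccontr)
        assume "F \<noteq> {}"
        then obtain S where S: "S \<in> F" by auto
        then obtain s where "s \<in> S" "s = j \<or> s = j + m" using inpair[of S j] j F_def by auto
        then show False using S F_def False j by auto
      qed
      moreover have "\<not>(\<forall>j\<in>T. x j \<noteq> x (j+m))" using j by auto
      ultimately show ?thesis using F_def by (simp only:) simp
    next
      case True
      let ?f = "\<lambda>S. transpose j (j+m) ` S"
      have "even (card F)"
      proof (rule even_invol[OF finF, of ?f], intro ballI conjI)
        fix S assume S: "S \<in> F"
        have Sg: "S \<in> g" using S F_def by auto
        show "?f S \<in> F" unfolding F_def
        proof (intro CollectI conjI ballI)
          show "?f S \<in> g" using sw jm Sg by auto
          fix i assume "i \<in> ?f S"
          then obtain z where z: "z \<in> S" "i = transpose j (j+m) z" by auto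
          have "x z" using z S F_def by auto
          then show "x i" using z True j by (auto simp: transpose_def)
        next
          show "(\<lambda>k. k mod m) ` ?f S = T" using pmt S F_def by auto
        qed
        obtain s where s: "s \<in> S" "s = j \<or> s = j + m" using inpair[of S j] j S F_def by auto
        have "\<not>(j\<in>S \<and> j+m\<in>S)" using pf jm Sg by auto
        then show "?f S \<noteq> S" using s m
          by (metis add_cancel_left_right image_eqI less_not_refl3 transpose_apply_first transpose_apply_second)
        show "?f (?f S) = S" by (simp add: image_image)
      qed
      then show ?thesis using j True F_def by auto
    qed
  next
    case True
    define S0 where "S0 = {i. i < 2*m \<and> i mod m \<in> T \<and> x i}"
    have charS: "S = S0 \<longleftrightarrow> (\<forall>s\<in>S. x s)" if hS: "S \<in> g" "(\<lambda>k. k mod m) ` S = T" for S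
    proof
      assume "S = S0" then show "\<forall>s\<in>S. x s" using S0_def by auto
    next
      assume xs: "\<forall>s\<in>S. x s"
      have "S \<subseteq> {0..<2*m}" using hS(1) rng by blast
      then have "S \<subseteq> S0" using xs hS(2) S0_def by auto
      moreover have "S0 \<subseteq> S"
      proof
        fix i assume i: "i \<in> S0"
        define j where "j = i mod m"
        have jT: "j \<in> T" using i S0_def j_def by auto
        have ij: "i = j \<or> i = j + m" using i S0_def j_def mod_cases2 by auto
        obtain s where s: "s \<in> S" "s = j \<or> s = j + m" using inpair[OF hS jT] by auto
        have "x s" "x i" using s xs i S0_def by auto
        then have "s = i" using s ij True jT by auto
        then show "i \<in> S" using s by simp
      qed
      ultimately show "S = S0" by auto
    qed
    have S0g: "S0 \<in> g"
    proof -
      have "\<forall>S. S \<in> g \<and> (\<lambda>k. k mod m) ` S = T \<and> card (S - S0) = k \<longrightarrow> S0 \<in> g" for k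
      proof (induction k rule: less_induct)
        case (less k)
        show ?case
        proof (intro allI impI)
          fix S assume S: "S \<in> g \<and> (\<lambda>k. k mod m) ` S = T \<and> card (S - S0) = k"
          show "S0 \<in> g"
          proof (cases "S - S0 = {}")
            case True
            have Ssub: "S \<subseteq> {0..<2*m}" using S rng by blast
            have "\<forall>s\<in>S. x s"
            proof
              fix s assume "s \<in> S"
              then have "s \<in> S0" using True by blast
              then show "x s" using S0_def by blast
            qed
            then have "S = S0" using charS S by auto
            then show ?thesis using S by simp
          next
            case False
            then obtain s where s: "s \<in> S" "s \<notin> S0" by auto
            have Ssub: "S \<subseteq> {0..<2*m}" using S rng by blast
            have s2: "s < 2*m" by (meson Ssub atLeastLessThan_iff s(1) subsetD)
            define j where "j = s mod m"
            have jT: "j \<in> T" using s S j_def by auto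
            have jm: "j < m" using j_def m by simp
            have sj: "s = j \<or> s = j + m" using s2 j_def mod_cases2 by auto
            have nxs: "\<not> x s" using s s2 jT j_def S0_def by auto
            define S' where "S' = transpose j (j+m) ` S"
            have S'g: "S' \<in> g" using sw jm S S'_def by auto
            have S'T: "(\<lambda>k. k mod m) ` S' = T" using pmt S S'_def by auto
            have pfS: "\<not>(j\<in>S \<and> j+m\<in>S)" using pf jm S by auto
            have sub: "S' - S0 \<subseteq> (S - S0) - {s}"
            proof
              fix y assume y: "y \<in> S' - S0"
              then obtain z where z: "z \<in> S" "y = transpose j (j+m) z" using S'_def by auto
              show "y \<in> (S - S0) - {s}"
              proof (cases "z = s")
                case True
                have xT: "x j \<noteq> x (j+m)" using \<open>\<forall>j\<in>T. x j \<noteq> x (j+m)\<close> jT by blast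
                have "y \<in> S0"
                proof (cases "s = j")
                  case True
                  have "y = j + m" using z(2) \<open>z = s\<close> True by simp
                  moreover have "x (j + m)" using nxs True xT by simp
                  moreover have "(j + m) mod m = j" using jm by simp
                  ultimately show ?thesis unfolding S0_def using jT jm by simp
                next
                  case False
                  then have sjm: "s = j + m" using sj by simp
                  have "y = j" using z(2) \<open>z = s\<close> sjm by simp
                  moreover have "x j" using nxs sjm xT by simp
                  moreover have "j mod m = j" using jm by simp
                  ultimately show ?thesis unfolding S0_def using jT jm by simp
                qed
                then show ?thesis using y by simp
              next
                case False
                have "z \<noteq> j" using sj pfS z(1) s(1) False by blast
                moreover have "z \<noteq> j + m" using sj pfS z(1) s(1) False by blast
                ultimately have "y = z" using z(2) by simp
                then show ?thesis using y z(1) False by blast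
              qed
            qed
            have finS: "finite S" using Ssub finite_subset by blast
            have "card (S' - S0) < card (S - S0)"
            proof -
              have "card (S' - S0) \<le> card ((S - S0) - {s})" using sub finS by (simp add: card_mono)
              also have "\<dots> < card (S - S0)" using s finS by (intro card_Diff1_less) auto
              finally show ?thesis .
            qed
            then have "card (S' - S0) < k" using S by simp
            then have "\<forall>S. S \<in> g \<and> (\<lambda>k. k mod m) ` S = T \<and> card (S - S0) = card (S' - S0) \<longrightarrow> S0 \<in> g"
              by (rule less.IH)
            then show ?thesis using S'g S'T by blast
          qed
        qed
      qed
      then show ?thesis using S1 by blast
    qed
    have "F = {S0}"
    proof
      show "F \<subseteq> {S0}"
      proof
        fix S assume "S \<in> F"
        then have "S \<in> g" "(\<lambda>k. k mod m) ` S = T" "\<forall>s\<in>S. x s" unfolding F_def by auto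
        then have "S = S0" using charS by blast
        then show "S \<in> {S0}" by simp
      qed
      have "\<forall>s\<in>S0. x s" using S0_def by auto
      moreover have "(\<lambda>k. k mod m) ` S0 = T"
      proof
        show "(\<lambda>k. k mod m) ` S0 \<subseteq> T" unfolding S0_def by blast
        show "T \<subseteq> (\<lambda>k. k mod m) ` S0"
        proof
          fix j assume jT: "j \<in> T"
          have jm: "j < m" using jT Tm by auto
          define i where "i = (if x j then j else j + m)"
          have "x i" using i_def True jT by auto
          moreover have "i mod m = j" using i_def jm by auto
          moreover have "i < 2*m" using i_def jm by auto
          ultimately show "j \<in> (\<lambda>k. k mod m) ` S0" unfolding S0_def using jT by (intro image_eqI[of _ _ i]) auto
        qed
      qed
      ultimately show "{S0} \<subseteq> F" using S0g unfolding F_def by blast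
    qed
    then have "card F = 1" by simp
    then show ?thesis using True unfolding F_def by simp
  qed
qed

theorem lemma1:
  fixes m n :: nat and g :: rpoly
  assumes "m \<ge> 1" and "n = 2 * m"
    and "is_rpoly n g"
    and "\<forall>i<m. rename_vars (transpose i (i + m)) g = g"
    and "\<forall>i<m. \<forall>S\<in>g. \<not> (i \<in> S \<and> i + m \<in> S)"
    and "rotation_symmetric n g"
  shows "\<exists>\<gamma>. is_rpoly m \<gamma> \<and> rotation_symmetric m \<gamma> \<and>
           (\<forall>x. anf_eval g x = anf_eval \<gamma> (\<lambda>i. x i \<noteq> x (i + m)))"
proof -
  have m: "m > 0" using assms(1) by simp
  have rng: "\<forall>S\<in>g. S \<subseteq> {0..<2*m}" using assms(2,3) unfolding is_rpoly_def by simp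
  have "g \<subseteq> Pow {0..<2*m}" using rng by blast
  then have fin: "finite g" using finite_subset by blast
  have sw: "\<forall>j<m. \<forall>S\<in>g. transpose j (j+m) ` S \<in> g"
  proof (intro allI impI ballI)
    fix j S assume "j < m" "S \<in> g"
    then have "transpose j (j+m) ` S \<in> rename_vars (transpose j (j + m)) g"
      unfolding rename_vars_def by blast
    then show "transpose j (j+m) ` S \<in> g" using assms(4) \<open>j < m\<close> by simp
  qed
  have pf: "\<forall>j<m. \<forall>S\<in>g. \<not>(j\<in>S \<and> j+m\<in>S)" using assms(5) by blast
  define pm where "pm = (\<lambda>S. (\<lambda>k::nat. k mod m) ` S)"
  define \<gamma> where "\<gamma> = pm ` g"
  have rp: "is_rpoly m \<gamma>" unfolding is_rpoly_def \<gamma>_def pm_def using m by auto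
  have rot: "rotation_symmetric m \<gamma>"
  proof -
    have eq: "(\<lambda>j. (j + 1) mod m) ` pm S = pm ((\<lambda>j. (j + 1) mod n) ` S)" for S
    proof -
      have "(k mod m + 1) mod m = ((k + 1) mod n) mod m" for k
        using assms(2) by (simp add: mod_mod_cancel mod_Suc_eq)
      then show ?thesis unfolding pm_def image_image by simp
    qed
    have "rename_vars (\<lambda>j. (j + 1) mod m) \<gamma> = pm ` rename_vars (\<lambda>j. (j + 1) mod n) g"
      unfolding rename_vars_def \<gamma>_def image_image eq by simp
    also have "\<dots> = \<gamma>" using assms(6) unfolding rotation_symmetric_def \<gamma>_def by simp
    finally show ?thesis unfolding rotation_symmetric_def .
  qed
  have ev: "anf_eval g x = anf_eval \<gamma> (\<lambda>i. x i \<noteq> x (i + m))" for x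
  proof -
    define F where "F = (\<lambda>T. {S\<in>g. (\<forall>i\<in>S. x i) \<and> (\<lambda>k. k mod m) ` S = T})"
    have P: "{S \<in> g. \<forall>i\<in>S. x i} = (\<Union>T\<in>\<gamma>. F T)"
      unfolding F_def \<gamma>_def pm_def by blast
    have finG: "finite \<gamma>" using fin \<gamma>_def by simp
    have "card (\<Union>T\<in>\<gamma>. F T) = (\<Sum>T\<in>\<gamma>. card (F T))"
      by (rule card_UN_disjoint) (use fin finG in \<open>auto simp: F_def\<close>)
    then have "anf_eval g x \<longleftrightarrow> odd (\<Sum>T\<in>\<gamma>. card (F T))"
      unfolding anf_eval_def P by simp
    also have "\<dots> \<longleftrightarrow> odd (card {T\<in>\<gamma>. odd (card (F T))})"
      by (rule parity_sum[OF finG])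
    also have "{T\<in>\<gamma>. odd (card (F T))} = {T\<in>\<gamma>. \<forall>i\<in>T. x i \<noteq> x (i + m)}"
    proof (intro Collect_cong conj_cong refl)
      fix T assume "T \<in> \<gamma>"
      then have "T \<in> (\<lambda>S. (\<lambda>k. k mod m) ` S) ` g" unfolding \<gamma>_def pm_def .
      then show "odd (card (F T)) \<longleftrightarrow> (\<forall>i\<in>T. x i \<noteq> x (i + m))"
        unfolding F_def by (rule fiber[OF m rng fin sw pf])
    qed
    finally show ?thesis unfolding anf_eval_def by simp
  qed
  show ?thesis using rp rot ev by blast
qed

end
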